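(* Let $\mathfrak{R}$ be an alternative ring with a nontrivial idempotent $e_1$ and Peirce decomposition $\mathfrak{R}=\mathfrak{R}_{11}\oplus\mathfrak{R}_{12}\oplus\mathfrak{R}_{21}\oplus\mathfrak{R}_{22}$, satisfying: (i) if $a_{11}\in\mathfrak{R}_{11}$, $a_{22}\in\mathfrak{R}_{22}$ and $[a_{11}+a_{22},\mathfrak{R}_{12}]=0$, then $a_{11}+a_{22}\in\mathcal{Z}(\mathfrak{R})$; (ii) if $a_{11}\in\mathfrak{R}_{11}$, $a_{22}\in\mathfrak{R}_{22}$ and $[a_{11}+a_{22},\mathfrak{R}_{21}]=0$, then $a_{11}+a_{22}\in\mathcal{Z}(\mathfrak{R})$. Let $\mathcal{D}$ be a multiplicative Lie-type derivation of $\mathfrak{R}$. Then for any $a_{11}\in\mathfrak{R}_{11}$, $b_{12}\in\mathfrak{R}_{12}$, $c_{21}\in\mathfrak{R}_{21}$, $d_{22}\in\mathfrak{R}_{22}$ there exists $z\in\mathcal{Z}(\mathfrak{R})$ such that $\mathcal{D}(a_{11}+b_{12}+c_{21}+d_{22})=\mathcal{D}(a_{11})+\mathcal{D}(b_{12})+\mathcal{D}(c_{21})+\mathcal{D}(d_{22})+z$.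
   Context: Rings are not assumed associative or unital. The associator is $(x,y,z)=(xy)z-x(yz)$; $\mathfrak{R}$ is alternative if $(x,x,y)=0=(y,x,x)$ for all $x,y$. $[x,y]=xy-yx$ and $\mathcal{Z}(\mathfrak{R})=\{r: [r,x]=0\ \forall x\in\mathfrak{R}\}$. Define $p_1(x)=x$, $p_n(x_1,\dots,x_n)=[p_{n-1}(x_1,\dots,x_{n-1}),x_n]$. For $n\ge2$, a (not necessarily additive) map $\mathcal{D}\colon\mathfrak{R}\to\mathfrak{R}$ is a multiplicative Lie $n$-derivation if $\mathcal{D}(p_n(x_1,\dots,x_n))=\sum_{i=1}^n p_n(x_1,\dots,\mathcal{D}(x_i),\dots,x_n)$ for all $x_i\in\mathfrak{R}$; a multiplicative Lie-type derivation is a multiplicative Lie $n$-derivation for some $n\ge2$. A nontrivial idempotent is $e_1\ne0$ with $e_1^2=e_1$ which is not a multiplicative identity. With $e_2a:=a-e_1a$, $ae_2:=a-ae_1$, set $\mathfrak{R}_{ij}=e_i\mathfrak{R}e_j$ ($i,j=1,2$), so $\mathfrak{R}=\bigoplus_{i,j}\mathfrak{R}_{ij}$. *)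

theory Defs
  imports Main
begin

class nonassoc_ring = ab_group_add + times +
  assumes na_distrib_right: "(a + b) * c = a * c + b * c"
  and na_distrib_left: "a * (b + c) = a * b + a * c"

definition associator :: "'a::nonassoc_ring \<Rightarrow> 'a \<Rightarrow> 'a \<Rightarrow> 'a" where
  "associator x y z = (x * y) * z - x * (y * z)"

class alternative_ring = nonassoc_ring +
  assumes left_alternative: "(x * x) * y - x * (x * y) = 0"
  and right_alternative: "(y * x) * x - y * (x * x) = 0"

definition lie :: "'a::nonassoc_ring \<Rightarrow> 'a \<Rightarrow> 'a" where
  "lie x y = x * y - y * x"

definition center :: "'a::nonassoc_ring set" where
  "center = {r. \<forall>x. lie r x = 0}"

text \<open>p_n(x_1,...,x_n) = [p_{n-1}(x_1,...,x_{n-1}), x_n], p_1(x) = x,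
  applied to a nonempty list [x_1,...,x_n].\<close>
definition pcomm :: "'a::nonassoc_ring list \<Rightarrow> 'a" where
  "pcomm xs = foldl lie (hd xs) (tl xs)"

definition mult_lie_n_derivation :: "nat \<Rightarrow> ('a::nonassoc_ring \<Rightarrow> 'a) \<Rightarrow> bool" where
  "mult_lie_n_derivation n D \<longleftrightarrow>
     (\<forall>xs. length xs = n \<longrightarrow>
        D (pcomm xs) = (\<Sum>i<n. pcomm (xs[i := D (xs ! i)])))"

definition mult_lie_type_derivation :: "('a::nonassoc_ring \<Rightarrow> 'a) \<Rightarrow> bool" where
  "mult_lie_type_derivation D \<longleftrightarrow> (\<exists>n\<ge>2. mult_lie_n_derivation n D)"

definition nontrivial_idempotent :: "'a::nonassoc_ring \<Rightarrow> bool" where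
  "nontrivial_idempotent e \<longleftrightarrow> e \<noteq> 0 \<and> e * e = e \<and> \<not> (\<forall>x. e * x = x \<and> x * e = x)"

text \<open>Left/right multiplication by e_1 and by e_2 (formal: e_2 a = a - e_1 a, a e_2 = a - a e_1).\<close>
definition lmul :: "'a::nonassoc_ring \<Rightarrow> nat \<Rightarrow> 'a \<Rightarrow> 'a" where
  "lmul e i a = (if i = 1 then e * a else a - e * a)"

definition rmul :: "'a::nonassoc_ring \<Rightarrow> nat \<Rightarrow> 'a \<Rightarrow> 'a" where
  "rmul e j a = (if j = 1 then a * e else a - a * e)"

text \<open>Peirce component R_ij = e_i R e_j = {(e_i x) e_j | x} (i, j \<in> {1,2}).\<close>
definition peirce :: "'a::nonassoc_ring \<Rightarrow> nat \<Rightarrow> nat \<Rightarrow> 'a set" where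
  "peirce e i j = {rmul e j (lmul e i x) | x. True}"

end

theory Submission
  imports Defs
begin

lemma na0l: "0 * (a::'a::nonassoc_ring) = 0"
proof -
  have "(0+0) * a = 0 * a + 0 * a" by (rule na_distrib_right)
  thus ?thesis by simp
qed
lemma na0r: "(a::'a::nonassoc_ring) * 0 = 0"
proof -
  have "a * (0+0) = a * 0 + a * 0" by (rule na_distrib_left)
  thus ?thesis by simp
qed
lemma naml: "(- a) * (b::'a::nonassoc_ring) = - (a * b)"
proof -
  have "(a + - a) * b = a * b + (-a) * b" by (rule na_distrib_right)
  thus ?thesis by (simp add: na0l eq_neg_iff_add_eq_0 add.commute)
qed
lemma namr: "b * (- a) = - (b * (a::'a::nonassoc_ring))"
proof -
  have "b * (a + - a) = b * a + b * (-a)" by (rule na_distrib_left)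
  thus ?thesis by (simp add: na0r eq_neg_iff_add_eq_0 add.commute)
qed
lemma nadl: "(a - b) * (c::'a::nonassoc_ring) = a * c - b * c"
  unfolding diff_conv_add_uminus by (simp only: na_distrib_right naml)
lemma nadr: "c * (a - b) = c * a - c * (b::'a::nonassoc_ring)"
  unfolding diff_conv_add_uminus by (simp only: na_distrib_left namr)

lemmas nas = na_distrib_left na_distrib_right na0l na0r naml namr nadl nadr

lemma ass_swap12: "associator x y z = - associator y x (z::'a::alternative_ring)"
proof -
  have "((x+y)*(x+y))*z - (x+y)*((x+y)*z) = 0" by (rule left_alternative)
  hence "((x*x)*z - x*(x*z)) + ((y*y)*z - y*(y*z)) + ((x*y)*z - x*(y*z)) + ((y*x)*z - y*(x*z)) = 0"
    apply (simp only: nas) by (simp add: algebra_simps)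
  hence "((x*y)*z - x*(y*z)) + ((y*x)*z - y*(x*z)) = 0" by (simp only: left_alternative add_0_left)
  thus ?thesis unfolding associator_def using eq_neg_iff_add_eq_0 by blast
qed

lemma ass_swap23: "associator x y z = - associator x z (y::'a::alternative_ring)"
proof -
  have "(x*(y+z))*(y+z) - x*((y+z)*(y+z)) = 0" by (rule right_alternative)
  hence "((x*y)*y - x*(y*y)) + ((x*z)*z - x*(z*z)) + ((x*y)*z - x*(y*z)) + ((x*z)*y - x*(z*y)) = 0"
    apply (simp only: nas) by (simp add: algebra_simps)
  hence "((x*y)*z - x*(y*z)) + ((x*z)*y - x*(z*y)) = 0" by (simp only: right_alternative add_0_left)
  thus ?thesis unfolding associator_def using eq_neg_iff_add_eq_0 by blast
qed


lemma ass_cyc: "associator x y z = associator y z (x::'a::alternative_ring)"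
  by (metis ass_swap12 ass_swap23 minus_minus)

definition is11 :: "'a::nonassoc_ring \<Rightarrow> 'a \<Rightarrow> bool" where "is11 e x \<longleftrightarrow> e*x = x \<and> x*e = x"
definition is12 :: "'a::nonassoc_ring \<Rightarrow> 'a \<Rightarrow> bool" where "is12 e x \<longleftrightarrow> e*x = x \<and> x*e = 0"
definition is21 :: "'a::nonassoc_ring \<Rightarrow> 'a \<Rightarrow> bool" where "is21 e x \<longleftrightarrow> e*x = 0 \<and> x*e = x"
definition is22 :: "'a::nonassoc_ring \<Rightarrow> 'a \<Rightarrow> bool" where "is22 e x \<longleftrightarrow> e*x = 0 \<and> x*e = 0"
definition LL :: "'a::nonassoc_ring \<Rightarrow> 'a \<Rightarrow> 'a" where "LL e z = lie z e"

locale idem =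
  fixes e :: "'a::alternative_ring"
  assumes ee: "e * e = e"
begin

lemma eex: "e * (e * x) = e * x"
  using left_alternative[of e x] by (simp add: ee)
lemma xee: "(x * e) * e = x * e"
  using right_alternative[of x e] by (simp add: ee)
lemma flex: "e * (x * e) = (e * x) * e"
proof -
  have "associator e x e = - associator e e x" by (rule ass_swap23)
  also have "associator e e x = 0" unfolding associator_def by (simp add: ee eex)
  finally show ?thesis unfolding associator_def by simp
qed

lemma P1:
  assumes v: "is21 e v" and t: "is12 e t"
  shows "is22 e (v*t)" "is11 e (t*v)"
proof -
  from v t have v1: "e*v = 0" "v*e = v" and t1: "e*t = t" "t*e = 0" by (auto simp: is21_def is12_def)
  have a1: "associator e v t = - associator v e t" by (rule ass_swap12)
  have a2: "associator v t e = associator e v t" by (rule ass_cyc[symmetric])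
  have a3: "associator e t v = - associator t e v" by (rule ass_swap12)
  have a4: "associator t v e = associator e t v" by (rule ass_cyc[symmetric])
  have "e*(v*t) = 0" using a1 v1 t1 by (simp add: associator_def nas)
  moreover have "(v*t)*e = 0" using a1 a2 v1 t1 by (simp add: associator_def nas)
  moreover have "e*(t*v) = t*v" using a3 v1 t1 by (simp add: associator_def nas)
  moreover have "(t*v)*e = t*v" using a3 a4 v1 t1 by (simp add: associator_def nas)
  ultimately show "is22 e (v*t)" "is11 e (t*v)" by (auto simp: is22_def is11_def)
qed

lemma P2:
  assumes h: "is11 e h" and t: "is12 e t"
  shows "is12 e (h*t)" "t*h = 0"
proof -
  from h t have h1: "e*h = h" "h*e = h" and t1: "e*t = t" "t*e = 0" by (auto simp: is11_def is12_def)
  have a1: "associator e h t = - associator h e t" by (rule ass_swap12)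
  have a2: "associator h t e = associator e h t" by (rule ass_cyc[symmetric])
  have a3: "associator t e h = associator e h t" by (rule ass_cyc)
  have "e*(h*t) = h*t" using a1 h1 t1 by (simp add: associator_def nas)
  moreover have "(h*t)*e = 0" using a1 a2 h1 t1 by (simp add: associator_def nas)
  moreover show "t*h = 0" using a1 a3 h1 t1 by (simp add: associator_def nas)
  ultimately show "is12 e (h*t)" by (auto simp: is12_def)
qed

lemma P3:
  assumes k: "is22 e k" and t: "is12 e t"
  shows "is12 e (t*k)" "k*t = 0"
proof -
  from k t have k1: "e*k = 0" "k*e = 0" and t1: "e*t = t" "t*e = 0" by (auto simp: is22_def is12_def)
  have a1: "associator t k e = - associator t e k" by (rule ass_swap23)
  have a2: "associator k t e = - associator t k e" by (rule ass_swap12)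
  have a3: "associator e k t = associator k t e" by (rule ass_cyc)
  have a4: "associator k e t = - associator e k t" by (rule ass_swap12)
  have a5: "associator e t k = - associator t e k" by (rule ass_swap12)
  have "(t*k)*e = 0" using a1 k1 t1 by (simp add: associator_def nas)
  moreover have "e*(t*k) = t*k" using a5 k1 t1 by (simp add: associator_def nas)
  ultimately show "is12 e (t*k)" by (auto simp: is12_def)
  show "k*t = 0" using a1 a2 a3 a4 k1 t1 by (simp add: associator_def nas)
qed

lemma P4:
  assumes h: "is11 e h" and r: "is21 e r"
  shows "is21 e (r*h)" "h*r = 0"
proof -
  from h r have h1: "e*h = h" "h*e = h" and r1: "e*r = 0" "r*e = r" by (auto simp: is11_def is21_def)
  have a1: "associator r h e = - associator r e h" by (rule ass_swap23)
  have a2: "associator e r h = - associator r e h" by (rule ass_swap12)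
  have a3: "associator h e r = associator e r h" by (rule ass_cyc)
  have "(r*h)*e = r*h" using a1 h1 r1 by (simp add: associator_def nas)
  moreover have "e*(r*h) = 0" using a2 h1 r1 by (simp add: associator_def nas)
  ultimately show "is21 e (r*h)" by (auto simp: is21_def)
  show "h*r = 0" using a2 a3 h1 r1 by (simp add: associator_def nas)
qed

lemma P5:
  assumes k: "is22 e k" and r: "is21 e r"
  shows "is21 e (k*r)" "r*k = 0"
proof -
  from k r have k1: "e*k = 0" "k*e = 0" and r1: "e*r = 0" "r*e = r" by (auto simp: is22_def is21_def)
  have a1: "associator r e k = associator e k r" by (rule ass_cyc)
  have a2: "associator e k r = - associator k e r" by (rule ass_swap12)
  have a3: "associator e k r = associator k r e" by (rule ass_cyc)
  have "e*(k*r) = 0" using a2 k1 r1 by (simp add: associator_def nas)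
  moreover have "(k*r)*e = k*r" using a2 a3 k1 r1 by (simp add: associator_def nas)
  ultimately show "is21 e (k*r)" by (auto simp: is21_def)
  show "r*k = 0" using a1 a2 k1 r1 by (simp add: associator_def nas)
qed

lemma P6:
  assumes u: "is12 e u" and t: "is12 e t"
  shows "is21 e (u*t)"
proof -
  from u t have u1: "e*u = u" "u*e = 0" and t1: "e*t = t" "t*e = 0" by (auto simp: is12_def)
  have a1: "associator e u t = - associator u e t" by (rule ass_swap12)
  have a2: "associator u t e = associator e u t" by (rule ass_cyc[symmetric])
  have "e*(u*t) = 0" using a1 u1 t1 by (simp add: associator_def nas)
  moreover have "(u*t)*e = u*t" using a1 a2 u1 t1 by (simp add: associator_def nas)
  ultimately show ?thesis by (auto simp: is21_def)
qed

end

lemma lie_add_l: "lie (a + b) c = lie a c + lie b (c::'a::nonassoc_ring)"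
  by (simp add: lie_def nas algebra_simps)
lemma lie_diff_l: "lie (a - b) c = lie a c - lie b (c::'a::nonassoc_ring)"
  by (simp add: lie_def nas algebra_simps)
lemma lie_add_r: "lie c (a + b) = lie c a + lie c (b::'a::nonassoc_ring)"
  by (simp add: lie_def nas algebra_simps)
lemma lie_0l: "lie 0 (c::'a::nonassoc_ring) = 0" by (simp add: lie_def nas)
lemma lie_0r: "lie c (0::'a::nonassoc_ring) = 0" by (simp add: lie_def nas)

lemma LL_add: "LL e (a + b) = LL e a + LL e b" by (simp add: LL_def lie_add_l)
lemma LL_diff: "LL e (a - b) = LL e a - LL e b" by (simp add: LL_def lie_diff_l)
lemma LL_0: "LL e 0 = 0" by (simp add: LL_def lie_0l)
lemma LL_minus: "LL e (- a) = - LL e a" using LL_diff[of e 0 a] by (simp add: LL_0)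

lemma LLk_add: "(LL e ^^ k) (a + b) = (LL e ^^ k) a + (LL e ^^ k) b"
  by (induct k) (auto simp: LL_add)
lemma LLk_0: "(LL e ^^ k) 0 = 0"
  by (induct k) (auto simp: LL_0)
lemma LLk_minus: "(LL e ^^ k) (- a) = - (LL e ^^ k) a"
  by (induct k) (auto simp: LL_minus)

lemma is12_add: "is12 e a \<Longrightarrow> is12 e b \<Longrightarrow> is12 e (a + b)" by (simp add: is12_def nas)
lemma is12_minus: "is12 e a \<Longrightarrow> is12 e (- a)" by (simp add: is12_def nas)
lemma is12_diff: "is12 e a \<Longrightarrow> is12 e b \<Longrightarrow> is12 e (a - b)" by (simp add: is12_def nas)
lemma is21_add: "is21 e a \<Longrightarrow> is21 e b \<Longrightarrow> is21 e (a + b)" by (simp add: is21_def nas)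
lemma is21_minus: "is21 e a \<Longrightarrow> is21 e (- a)" by (simp add: is21_def nas)
lemma is21_diff: "is21 e a \<Longrightarrow> is21 e b \<Longrightarrow> is21 e (a - b)" by (simp add: is21_def nas)

lemma LL11: "is11 e h \<Longrightarrow> LL e h = 0" by (simp add: is11_def LL_def lie_def)
lemma LL22: "is22 e h \<Longrightarrow> LL e h = 0" by (simp add: is22_def LL_def lie_def)
lemma LL12: "is12 e h \<Longrightarrow> LL e h = - h" by (simp add: is12_def LL_def lie_def)
lemma LL21: "is21 e h \<Longrightarrow> LL e h = h" by (simp add: is21_def LL_def lie_def)

lemma LLk21: "is21 e h \<Longrightarrow> (LL e ^^ k) h = h" by (induct k) (auto simp: LL21)
lemma LLk_diag: "LL e h = 0 \<Longrightarrow> k \<ge> 1 \<Longrightarrow> (LL e ^^ k) h = 0"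
proof (induct k)
  case (Suc k) thus ?case by (cases "k = 0") (auto simp: LL_0)
qed simp
lemma LLk12: "is12 e h \<Longrightarrow> (LL e ^^ k) h = (if even k then h else - h)"
  by (induct k) (auto simp: LL12 LL_minus is12_minus)
lemma LLk12_is: "is12 e h \<Longrightarrow> is12 e ((LL e ^^ k) h)"
  by (simp add: LLk12 is12_minus)
lemma LLk12_inv: "is12 e h \<Longrightarrow> (LL e ^^ k) ((LL e ^^ k) h) = h"
  by (simp add: LLk12 is12_minus)
lemma LLk12_zero: "is12 e h \<Longrightarrow> (LL e ^^ k) h = 0 \<Longrightarrow> h = 0"
  by (simp add: LLk12 split: if_splits)
lemma LLk21_zero: "is21 e h \<Longrightarrow> (LL e ^^ k) h = 0 \<Longrightarrow> h = 0"
  by (simp add: LLk21)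

context idem
begin

lemma LL3: "LL e (LL e (LL e z)) = LL e z"
  by (simp add: LL_def lie_def nas flex eex xee ee algebra_simps)

lemma LLk_diag_back: assumes "k \<ge> 1" "(LL e ^^ k) z = 0" shows "LL e z = 0"
proof -
  have "\<forall>k\<ge>1. (LL e ^^ k) z = LL e z \<or> (LL e ^^ k) z = LL e (LL e z)"
  proof (intro allI impI)
    fix k :: nat assume "k \<ge> 1"
    thus "(LL e ^^ k) z = LL e z \<or> (LL e ^^ k) z = LL e (LL e z)"
    proof (induct k)
      case (Suc k) thus ?case by (cases "k = 0") (auto simp: LL3)
    qed simp
  qed
  with assms have "LL e z = 0 \<or> LL e (LL e z) = 0" by auto
  thus ?thesis by (metis LL3 LL_0)
qed

lemma e11: "is11 e e" by (simp add: is11_def ee)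

lemma diag_dec: assumes "LL e z = 0" shows "is11 e (e*z)" "is22 e (z - e*z)"
proof -
  from assms have ze: "z*e = e*z" by (simp add: LL_def lie_def)
  have eze: "(e*z)*e = e*z" by (metis ze xee)
  thus "is11 e (e*z)" by (simp add: is11_def eex)
  show "is22 e (z - e*z)" by (simp add: is22_def eex nas eze ze)
qed

lemma diag_lie12: assumes "LL e z = 0" "is12 e t" shows "is12 e (lie z t)"
proof -
  define h where "h = e*z"
  define k where "k = z - e*z"
  have h: "is11 e h" and k: "is22 e k" using diag_dec[OF assms(1)] by (auto simp: h_def k_def)
  have z: "z = h + k" by (simp add: h_def k_def)
  have "lie z t = h*t - t*k"
    using P2[OF h assms(2)] P3[OF k assms(2)] by (simp add: z lie_def nas)
  thus ?thesis using P2[OF h assms(2)] P3[OF k assms(2)] by (simp add: is12_diff)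
qed

lemma diag_lie21: assumes "LL e z = 0" "is21 e t" shows "is21 e (lie z t)"
proof -
  define h where "h = e*z"
  define k where "k = z - e*z"
  have h: "is11 e h" and k: "is22 e k" using diag_dec[OF assms(1)] by (auto simp: h_def k_def)
  have z: "z = h + k" by (simp add: h_def k_def)
  have "lie z t = k*t - t*h"
    using P4[OF h assms(2)] P5[OF k assms(2)] by (simp add: z lie_def nas)
  thus ?thesis using P4[OF h assms(2)] P5[OF k assms(2)] by (simp add: is21_diff)
qed

lemma lie21_12_diag: assumes "is21 e v" "is12 e t" shows "LL e (lie v t) = 0"
  using P1[OF assms] by (simp add: lie_def LL_diff LL11 LL22)

lemma lie12_12: assumes "is12 e u" "is12 e t" shows "is21 e (lie u t)"
  using P6[OF assms] P6[OF assms(2,1)] by (simp add: lie_def is21_diff)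

lemma peirce11: "x \<in> peirce e 1 1 \<longleftrightarrow> is11 e x"
proof
  assume "x \<in> peirce e 1 1"
  then obtain y where "x = (e*y)*e" by (auto simp: peirce_def lmul_def rmul_def)
  thus "is11 e x" by (simp add: is11_def xee flex[symmetric] eex)
next
  assume "is11 e x" thus "x \<in> peirce e 1 1"
    unfolding peirce_def lmul_def rmul_def is11_def by (auto intro!: exI[of _ x])
qed

lemma peirce22: "x \<in> peirce e 2 2 \<longleftrightarrow> is22 e x"
proof
  assume "x \<in> peirce e 2 2"
  then obtain y where "x = (y - e*y) - (y - e*y)*e" by (auto simp: peirce_def lmul_def rmul_def)
  thus "is22 e x" by (simp add: is22_def nas xee flex eex)
next
  assume "is22 e x" thus "x \<in> peirce e 2 2"
    unfolding peirce_def lmul_def rmul_def is22_def by (auto intro!: exI[of _ x] simp: nas)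
qed

lemma peirce12: "x \<in> peirce e 1 2 \<longleftrightarrow> is12 e x"
proof
  assume "x \<in> peirce e 1 2"
  then obtain y where "x = (e*y) - (e*y)*e" by (auto simp: peirce_def lmul_def rmul_def)
  thus "is12 e x" by (simp add: is12_def nas xee flex eex)
next
  assume "is12 e x" thus "x \<in> peirce e 1 2"
    unfolding peirce_def lmul_def rmul_def is12_def by (auto intro!: exI[of _ x] simp: nas)
qed

lemma peirce21: "x \<in> peirce e 2 1 \<longleftrightarrow> is21 e x"
proof
  assume "x \<in> peirce e 2 1"
  then obtain y where "x = (y - e*y)*e" by (auto simp: peirce_def lmul_def rmul_def)
  thus "is21 e x" by (simp add: is21_def nas xee flex eex)
next
  assume "is21 e x" thus "x \<in> peirce e 2 1"
    unfolding peirce_def lmul_def rmul_def is21_def by (auto intro!: exI[of _ x] simp: nas)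
qed

end

lemma foldl_lie_add: "foldl lie (a + b) ys = foldl lie a ys + foldl lie (b::'a::nonassoc_ring) ys"
  by (induct ys arbitrary: a b) (auto simp: lie_add_l)
lemma foldl_lie_diff: "foldl lie (a - b) ys = foldl lie a ys - foldl lie (b::'a::nonassoc_ring) ys"
  by (induct ys arbitrary: a b) (auto simp: lie_diff_l)
lemma foldl_lie_0: "foldl lie (0::'a::nonassoc_ring) ys = 0"
  by (induct ys) (auto simp: lie_0l)
lemma foldl_rep: "foldl lie z (replicate k e) = (LL e ^^ k) (z::'a::nonassoc_ring)"
  by (induct k arbitrary: z) (auto simp: LL_def funpow_Suc_right simp del: funpow.simps)
lemma foldl_center: "z \<in> center \<Longrightarrow> foldl lie z (y # ys) = (0::'a::nonassoc_ring)"
  by (simp add: center_def foldl_lie_0)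
lemma center_add: "a \<in> center \<Longrightarrow> b \<in> center \<Longrightarrow> a + b \<in> (center::'a::nonassoc_ring set)"
  by (simp add: center_def lie_add_l)

definition ddf :: "('a::nonassoc_ring \<Rightarrow> 'a) \<Rightarrow> 'a \<Rightarrow> 'a \<Rightarrow> 'a" where
  "ddf D X Y = D (X + Y) - D X - D Y"

definition goodt :: "('a::nonassoc_ring \<Rightarrow> 'a) \<Rightarrow> 'a list \<Rightarrow> bool" where
  "goodt D ys \<longleftrightarrow> (\<forall>X Y. foldl lie (ddf D X Y) ys = ddf D (foldl lie X ys) (foldl lie Y ys))"

lemma goodt_append: "goodt D ys \<Longrightarrow> goodt D zs \<Longrightarrow> goodt D (ys @ zs)"
  unfolding goodt_def by simp

lemma ddf_cocycle: "ddf D A (B + C) = ddf D A B + ddf D (A + B) C - ddf D B C"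
  by (simp add: ddf_def algebra_simps)
lemma ddf_comm: "ddf D A B = ddf D B A"
  by (simp add: ddf_def algebra_simps)

locale lied =
  fixes D :: "'a::nonassoc_ring \<Rightarrow> 'a" and n :: nat
  assumes der: "mult_lie_n_derivation n D" and n2: "n \<ge> 2"
begin

lemma D0: "D 0 = 0"
proof -
  let ?xs = "replicate n (0::'a)"
  have "D (pcomm ?xs) = (\<Sum>i<n. pcomm (?xs[i := D (?xs ! i)]))"
    using der unfolding mult_lie_n_derivation_def by auto
  moreover have "pcomm ?xs = 0"
    using n2 by (cases n) (auto simp: pcomm_def foldl_lie_0)
  moreover have "pcomm (?xs[i := D (?xs ! i)]) = 0" if "i < n" for i
  proof (cases i)
    case 0
    obtain m where m: "n = Suc (Suc m)" using n2 by (metis add_2_eq_Suc le_Suc_ex)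
    show ?thesis using 0 by (simp add: m pcomm_def lie_0r foldl_lie_0)
  next
    case (Suc j)
    obtain m where m: "n = Suc m" using n2 by (cases n) auto
    show ?thesis using Suc by (simp add: m pcomm_def foldl_lie_0)
  qed
  ultimately show ?thesis by simp
qed

lemma ddf_0: "ddf D 0 Y = 0" by (simp add: ddf_def D0)
lemma ddf_0r: "ddf D Y 0 = 0" by (simp add: ddf_def D0)

lemma good_n: assumes len: "length ys = n - 1" shows "goodt D ys"
proof -
  obtain m where m: "n = Suc m" using n2 by (cases n) auto
  define S where "S X = (\<Sum>i<m. foldl lie X (ys[i := D (ys ! i)]))" for X
  have key: "D (foldl lie X ys) = foldl lie (D X) ys + S X" for X
  proof -
    have "length (X # ys) = n" using len m by simp
    hence "D (pcomm (X # ys)) = (\<Sum>i<n. pcomm ((X # ys)[i := D ((X # ys) ! i)]))"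
      using der unfolding mult_lie_n_derivation_def by blast
    also have "\<dots> = pcomm (D X # ys) + (\<Sum>i<m. pcomm (X # ys[i := D (ys ! i)]))"
      unfolding m sum.lessThan_Suc_shift by simp
    finally show ?thesis by (simp add: pcomm_def S_def)
  qed
  have Sadd: "S (X + Y) = S X + S Y" for X Y
    unfolding S_def by (simp add: foldl_lie_add sum.distrib)
  show ?thesis unfolding goodt_def
  proof (intro allI)
    fix X Y
    have "ddf D (foldl lie X ys) (foldl lie Y ys) = D (foldl lie (X + Y) ys) - D (foldl lie X ys) - D (foldl lie Y ys)"
      by (simp add: ddf_def foldl_lie_add)
    also have "\<dots> = foldl lie (D (X+Y)) ys - foldl lie (D X) ys - foldl lie (D Y) ys"
      by (simp add: key Sadd algebra_simps)
    also have "\<dots> = foldl lie (ddf D X Y) ys" by (simp add: ddf_def foldl_lie_diff)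
    finally show "foldl lie (ddf D X Y) ys = ddf D (foldl lie X ys) (foldl lie Y ys)" by simp
  qed
qed

end

lemma lie_anti: "lie u r = - lie r (u::'a::nonassoc_ring)" by (simp add: lie_def)

locale mainl = idem e + lied D n
  for e :: "'a::alternative_ring" and D :: "'a \<Rightarrow> 'a" and n +
  assumes ci: "\<And>z. LL e z = 0 \<Longrightarrow> (\<forall>t. is12 e t \<longrightarrow> lie z t = 0) \<Longrightarrow> z \<in> center"
    and cii: "\<And>z. LL e z = 0 \<Longrightarrow> (\<forall>t. is21 e t \<longrightarrow> lie z t = 0) \<Longrightarrow> z \<in> center"
begin

definition TE where "TE = replicate (n - 1) e"
definition Tt where "Tt Y = (Y # replicate (n - 2) e) @ replicate (n - 1) e"
definition K where "K = (n - 1) + (n - 2)"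

lemma K1: "K \<ge> 1" using n2 by (simp add: K_def)
lemma n1: "n - 1 \<ge> 1" using n2 by simp

lemma good_TE: "goodt D TE" unfolding TE_def by (rule good_n) simp
lemma good_Tt: "goodt D (Tt Y)" unfolding Tt_def
  by (rule goodt_append; rule good_n) (use n2 in auto)
lemma f_TE: "foldl lie z TE = (LL e ^^ (n - 1)) z" by (simp add: TE_def foldl_rep)
lemma f_Tt: "foldl lie z (Tt Y) = (LL e ^^ K) (lie z Y)"
  by (simp add: Tt_def foldl_rep K_def funpow_add)

lemma gTE: "foldl lie (ddf D X Y) TE = ddf D ((LL e ^^ (n - 1)) X) ((LL e ^^ (n - 1)) Y)"
  using good_TE unfolding goodt_def by (simp add: f_TE)
lemma gTt: "(LL e ^^ K) (lie (ddf D X Y) Z) = ddf D ((LL e ^^ K) (lie X Z)) ((LL e ^^ K) (lie Y Z))"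
  using good_Tt[of Z] unfolding goodt_def by (simp add: f_Tt)

lemma claimA: assumes h: "LL e h = 0" and v: "is21 e v" shows "ddf D h v \<in> center"
proof -
  let ?d = "ddf D h v"
  have "foldl lie ?d TE = 0" using gTE LLk_diag[OF h n1] by (simp add: ddf_0)
  hence d: "LL e ?d = 0" using LLk_diag_back[OF n1] by (simp add: f_TE)
  show ?thesis
  proof (rule ci[OF d], intro allI impI)
    fix t assume t: "is12 e t"
    have "(LL e ^^ K) (lie v t) = 0" using LLk_diag[OF lie21_12_diag[OF v t] K1] .
    hence "(LL e ^^ K) (lie ?d t) = 0" using gTt[of h v t] by (simp add: ddf_0r)
    thus "lie ?d t = 0" using LLk12_zero[OF diag_lie12[OF d t]] by blast
  qed
qed

lemma claimA': assumes h: "LL e h = 0" and u: "is12 e u" shows "ddf D h u \<in> center"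
proof -
  let ?d = "ddf D h u"
  have "foldl lie ?d TE = ddf D 0 ((LL e ^^ (n - 1)) u)" using gTE LLk_diag[OF h n1] by simp
  hence "foldl lie ?d TE = 0" by (simp add: ddf_0)
  hence d: "LL e ?d = 0" using LLk_diag_back[OF n1] by (simp add: f_TE)
  show ?thesis
  proof (rule cii[OF d], intro allI impI)
    fix t assume t: "is21 e t"
    have "LL e (lie u t) = 0" using lie21_12_diag[OF t u] by (simp add: lie_anti[of u] LL_minus)
    hence "(LL e ^^ K) (lie u t) = 0" using LLk_diag K1 by blast
    hence "(LL e ^^ K) (lie ?d t) = 0" using gTt[of h u t] by (simp add: ddf_0r)
    thus "lie ?d t = 0" using LLk21_zero[OF diag_lie21[OF d t]] by blast
  qed
qed

lemma lie_e_te: "is12 e t \<Longrightarrow> lie e (t + e) = t"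
  by (simp add: lie_def is12_def nas ee)

lemma beta: assumes u: "is12 e u" and v: "is21 e v" shows "ddf D u v = 0"
proof -
  define t where "t = (LL e ^^ K) u"
  have t: "is12 e t" unfolding t_def by (rule LLk12_is[OF u])
  have 1: "(LL e ^^ K) (lie e (t + e)) = u" using lie_e_te[OF t] LLk12_inv[OF u] by (simp add: t_def)
  have "(LL e ^^ K) (lie v (t + e)) = (LL e ^^ K) (lie v t) + (LL e ^^ K) (LL e v)"
    by (simp add: lie_add_r LLk_add LL_def)
  also have "\<dots> = v" using LLk_diag[OF lie21_12_diag[OF v t] K1] LL21[OF v] LLk21[OF v] by simp
  finally have 2: "(LL e ^^ K) (lie v (t + e)) = v" .
  have c: "ddf D e v \<in> center" by (rule claimA[OF LL11[OF e11] v])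
  have "(LL e ^^ K) (lie (ddf D e v) (t + e)) = 0"
    using c by (simp add: center_def LLk_0)
  thus ?thesis using gTt[of e v "t + e"] 1 2 by simp
qed

lemma alpha: assumes A: "is12 e A" and B: "is12 e B" shows "ddf D A B = 0"
proof -
  define t where "t = (LL e ^^ K) A"
  define u where "u = - (LL e ^^ K) B"
  have t: "is12 e t" unfolding t_def by (rule LLk12_is[OF A])
  have u: "is12 e u" unfolding u_def by (rule is12_minus[OF LLk12_is[OF B]])
  have 1: "(LL e ^^ K) (lie e (t + e)) = A" using lie_e_te[OF t] LLk12_inv[OF A] by (simp add: t_def)
  have C: "is21 e (lie u t)" by (rule lie12_12[OF u t])
  have "(LL e ^^ K) (lie u (t + e)) = (LL e ^^ K) (lie u t) + (LL e ^^ K) (LL e u)"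
    by (simp add: lie_add_r LLk_add LL_def)
  also have "\<dots> = lie u t + B" using LLk21[OF C] LL12[OF u] LLk12_inv[OF B]
    by (simp add: u_def LLk_minus)
  finally have 2: "(LL e ^^ K) (lie u (t + e)) = lie u t + B" .
  have c: "ddf D e u \<in> center" by (rule claimA'[OF LL11[OF e11] u])
  have "(LL e ^^ K) (lie (ddf D e u) (t + e)) = 0"
    using c by (simp add: center_def LLk_0)
  hence 0: "ddf D A (B + lie u t) = 0" using gTt[of e u "t + e"] 1 2 by (simp add: add.commute)
  have "ddf D (A + B) (lie u t) = 0" by (rule beta[OF is12_add[OF A B] C])
  moreover have "ddf D B (lie u t) = 0" by (rule beta[OF B C])
  ultimately show ?thesis using 0 ddf_cocycle[of D A B "lie u t"] by simp
qed

lemma four: assumes a: "is11 e a" and b: "is12 e b" and c: "is21 e c" and d: "is22 e d"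
  shows "\<exists>z \<in> center. D (a + b + c + d) = D a + D b + D c + D d + z"
proof -
  have la: "LL e a = 0" by (rule LL11[OF a])
  have ld: "LL e d = 0" by (rule LL22[OF d])
  have d1: "ddf D a b \<in> center" by (rule claimA'[OF la b])
  have d2: "ddf D d c \<in> center" by (rule claimA[OF ld c])
  let ?X = "ddf D (a + b) (c + d)"
  have "foldl lie ?X TE = ddf D ((LL e ^^ (n - 1)) b) c"
    using gTE[of "a + b" "c + d"] LLk_diag[OF la n1] LLk_diag[OF ld n1] LLk21[OF c]
    by (simp add: LLk_add)
  also have "\<dots> = 0" by (rule beta[OF LLk12_is[OF b] c])
  finally have X: "LL e ?X = 0" using LLk_diag_back[OF n1] by (simp add: f_TE)
  have Xc: "?X \<in> center"
  proof (rule ci[OF X], intro allI impI)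
    fix t assume t: "is12 e t"
    define P where "P = (LL e ^^ K) (lie a t)"
    define Q where "Q = lie b t"
    define R where "R = (LL e ^^ K) (lie d t)"
    have P: "is12 e P" unfolding P_def by (rule LLk12_is[OF diag_lie12[OF la t]])
    have Q: "is21 e Q" unfolding Q_def by (rule lie12_12[OF b t])
    have R: "is12 e R" unfolding R_def by (rule LLk12_is[OF diag_lie12[OF ld t]])
    have e1: "(LL e ^^ K) (lie (a + b) t) = P + Q"
      by (simp add: lie_add_l LLk_add P_def Q_def[symmetric] LLk21[OF Q])
    have e2: "(LL e ^^ K) (lie (c + d) t) = R"
      using LLk_diag[OF lie21_12_diag[OF c t] K1] by (simp add: lie_add_l LLk_add R_def)
    have "ddf D R (P + Q) = 0"
      using ddf_cocycle[of D R P Q] alpha[OF R P] beta[OF is12_add[OF R P] Q] beta[OF P Q] by simp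
    hence "(LL e ^^ K) (lie ?X t) = 0" using gTt[of "a + b" "c + d" t] e1 e2 by (simp add: ddf_comm)
    thus "lie ?X t = 0" using LLk12_zero[OF diag_lie12[OF X t]] by blast
  qed
  have "D (a + b + c + d) = D a + D b + D c + D d + (?X + ddf D a b + ddf D d c)"
    by (simp add: ddf_def algebra_simps)
  moreover have "?X + ddf D a b + ddf D d c \<in> center" using Xc d1 d2 by (simp add: center_add)
  ultimately show ?thesis by blast
qed

end

theorem lemma2p6:
  fixes e :: "'a::alternative_ring" and D :: "'a \<Rightarrow> 'a"
  assumes idem: "nontrivial_idempotent e"
    and cond_i: "\<And>a11 a22. a11 \<in> peirce e 1 1 \<Longrightarrow> a22 \<in> peirce e 2 2 \<Longrightarrow>
          (\<forall>x \<in> peirce e 1 2. lie (a11 + a22) x = 0) \<Longrightarrow> a11 + a22 \<in> center"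
    and cond_ii: "\<And>a11 a22. a11 \<in> peirce e 1 1 \<Longrightarrow> a22 \<in> peirce e 2 2 \<Longrightarrow>
          (\<forall>x \<in> peirce e 2 1. lie (a11 + a22) x = 0) \<Longrightarrow> a11 + a22 \<in> center"
    and D: "mult_lie_type_derivation D"
    and a: "a11 \<in> peirce e 1 1" and b: "b12 \<in> peirce e 1 2"
    and c: "c21 \<in> peirce e 2 1" and d: "d22 \<in> peirce e 2 2"
  shows "\<exists>z \<in> center. D (a11 + b12 + c21 + d22) = D a11 + D b12 + D c21 + D d22 + z"
proof -
  have ee: "e * e = e" using idem by (simp add: nontrivial_idempotent_def)
  interpret idem e by unfold_locales (rule ee)
  obtain n where n: "n \<ge> 2" "mult_lie_n_derivation n D"
    using D by (auto simp: mult_lie_type_derivation_def)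
  interpret lied D n by unfold_locales (use n in auto)
  interpret mainl e D n
  proof unfold_locales
    fix z assume z: "LL e z = 0" and h: "\<forall>t. is12 e t \<longrightarrow> lie z t = 0"
    have A1: "e * z \<in> peirce e 1 1" using diag_dec(1)[OF z] peirce11 by blast
    have A2: "z - e * z \<in> peirce e 2 2" using diag_dec(2)[OF z] peirce22 by blast
    have A3: "\<forall>x \<in> peirce e 1 2. lie (e * z + (z - e * z)) x = 0" using h peirce12 by simp
    have "e * z + (z - e * z) \<in> center" by (rule cond_i[OF A1 A2 A3])
    thus "z \<in> center" by simp
  next
    fix z assume z: "LL e z = 0" and h: "\<forall>t. is21 e t \<longrightarrow> lie z t = 0"
    have A1: "e * z \<in> peirce e 1 1" using diag_dec(1)[OF z] peirce11 by blast
    have A2: "z - e * z \<in> peirce e 2 2" using diag_dec(2)[OF z] peirce22 by blast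
    have A3: "\<forall>x \<in> peirce e 2 1. lie (e * z + (z - e * z)) x = 0" using h peirce21 by simp
    have "e * z + (z - e * z) \<in> center" by (rule cond_ii[OF A1 A2 A3])
    thus "z \<in> center" by simp
  qed
  show ?thesis
    by (rule four) (use a b c d peirce11 peirce22 peirce12 peirce21 in blast)+
qed

end
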